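(* In the configuration described in the context, let $R_1=\delta r_1^2$ and $R_2=\delta r_2^2$ where $\delta,r_1,r_2,r_3$ are positive integers with $\gcd(r_1,r_2)=1$, $r_1>r_2$ and $r_1^2+r_2^2=r_3^2$. Then all of the lengths $T_1T_2$, $C_1M$, $C_2M$, $T_1I$, $T_2I$, $C_1M_1$, $C_2M_2$, $M_1M$, $M_2M$, $IM$, $C_2K$, $T_2K$, $C_1K$, $T_1K$ are integers if and only if $r_3(r_1^2-r_2^2)$ divides $\delta$, i.e. $\delta = t\,r_3(r_1^2-r_2^2)$ for a positive integer $t$, so that $R_1 = t r_3 r_1^2(r_1^2-r_2^2)$ and $R_2 = t r_3 r_2^2 (r_1^2-r_2^2)$. In that case $T_1T_2 = 2tr_1r_2r_3(r_1^2-r_2^2)$, $C_1M = tr_1r_3^2(r_1^2-r_2^2)$, $C_2M = tr_2r_3^2(r_1^2-r_2^2)$, $T_1I = 2tr_2r_1^2(r_1^2-r_2^2)$, $T_2I = 2tr_1r_2^2(r_1^2-r_2^2)$, $C_1M_1 = tr_1^3(r_1^2-r_2^2)$, $C_2M_2 = tr_2^3(r_1^2-r_2^2)$, $M_1M = tr_1r_2^2(r_1^2-r_2^2)$, $M_2M = tr_2r_1^2(r_1^2-r_2^2)$, $IM=T_1M=T_2M = tr_1r_2r_3(r_1^2-r_2^2)$, $C_2K = tr_2^2r_3^3$, $T_2K = 2tr_1r_3r_2^3$, $C_1K = tr_1^2r_3^3$, $T_1K = 2tr_2r_3r_1^3$; consequently the right triangles $C_1T_1M_1$, $C_1IM_1$,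 $C_2T_2M_2$, $C_2IM_2$, $T_1M_1M$, $MM_1I$, $IM_2M$, $MM_2T_2$, $C_1T_1M$, $C_1IM$, $C_2T_2M$, $C_2IM$, $C_1MC_2$, $T_1IT_2$, $C_2T_2K$, $C_1T_1K$ all have integer side lengths.
   Context: Configuration: two circles in the plane with centers $C_1,C_2$ and radii $R_1>R_2>0$, externally tangent at the point $I$ (so $I$ lies on segment $C_1C_2$ and $C_1C_2=R_1+R_2$). Let a common external tangent line touch the first circle at $T_1$ and the second circle at $T_2$ (both circles on the same side of line $T_1T_2$). Let $M$ be the midpoint of segment $T_1T_2$; equivalently, $M$ is the point where the common tangent line at $I$ (the line through $I$ perpendicular to $C_1C_2$) meets $T_1T_2$. Let $M_1$ be the midpoint of segment $T_1I$ (which is the intersection point of segment $C_1M$ with $T_1I$, the foot of the perpendicular from $C_1$ to $T_1I$), and $M_2$ the midpoint of segment $T_2I$ (the intersection of $C_2M$ with $T_2I$). Since $R_1>R_2$, the lines $T_1T_2$ and $C_1C_2$ meet at a point $K$, lying beyond $C_2$ on ray $C_1C_2$ and beyond $T_2$ on ray $T_1T_2$. For points $X,Y$, $XY$ denotes the length of segment $\overline{XY}$. *)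

theory Defs
  imports "HOL-Analysis.Analysis"
begin

end

theory Submission
  imports Defs
begin



lemma key2d:
  fixes n m w :: "real ^ 2"
  assumes "n \<bullet> w = 0" "m \<bullet> w = 0" "w \<noteq> 0"
  shows "(n \<bullet> m)^2 = (n \<bullet> n) * (m \<bullet> m)"
proof -
  have w: "w$1 \<noteq> 0 \<or> w$2 \<noteq> 0" using assms(3) by (auto simp: vec_eq_iff forall_2)
  have e1: "n$1*w$1 + n$2*w$2 = 0" using assms(1) by (simp add: inner_vec_def sum_2)
  have e2: "m$1*w$1 + m$2*w$2 = 0" using assms(2) by (simp add: inner_vec_def sum_2)
  have "w$1 * (n$1*m$2 - n$2*m$1) = 0" "w$2 * (n$1*m$2 - n$2*m$1) = 0"
    using e1 e2 by algebra+
  then have det: "n$1*m$2 - n$2*m$1 = 0" using w by auto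
  show ?thesis using det by (simp add: inner_vec_def sum_2) algebra
qed

lemma coordnorm:
  fixes n w :: "real ^ 2"
  assumes "n \<bullet> w = 0"
  shows "norm (x *\<^sub>R n + y *\<^sub>R w) = sqrt (x^2 * (n \<bullet> n) + y^2 * (w \<bullet> w))"
proof -
  have "norm (x *\<^sub>R n + y *\<^sub>R w) ^2 = (x *\<^sub>R n + y *\<^sub>R w) \<bullet> (x *\<^sub>R n + y *\<^sub>R w)"
    by (simp add: dot_square_norm)
  also have "\<dots> = x^2 * (n \<bullet> n) + y^2 * (w \<bullet> w)"
    using assms by (simp add: inner_simps inner_commute power2_eq_square algebra_simps)
  finally show ?thesis by (metis norm_ge_zero real_sqrt_unique)
qed




lemma geom:
  fixes C1 C2 I T1 T2 K :: "real ^ 2" and R1 R2 :: real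
  assumes R: "R1 > R2" "R2 > 0"
    and centers: "dist C1 C2 = R1 + R2"
    and I_seg: "I \<in> closed_segment C1 C2" and I_dist: "dist C1 I = R1"
    and T1_on: "dist C1 T1 = R1" and T2_on: "dist C2 T2 = R2"
    and T1_tan: "(T2 - T1) \<bullet> (C1 - T1) = 0"
    and T2_tan: "(T1 - T2) \<bullet> (C2 - T2) = 0"
    and T12_ne: "T1 \<noteq> T2"
    and same_side: "(C1 - T1) \<bullet> (C2 - T2) > 0"
    and K_T: "collinear {T1, T2, K}" and K_C: "collinear {C1, C2, K}"
  shows "(C1 - T1) \<bullet> (C1 - T1) = R1^2" "(T2 - T1) \<bullet> (T2 - T1) = 4*R1*R2"
    "(C1 - T1) \<bullet> (T2 - T1) = 0"
    "C1 = T1 + (C1 - T1)" "T2 = T1 + (T2 - T1)"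
    "C2 = T1 + (R2/R1) *\<^sub>R (C1 - T1) + (T2 - T1)"
    "I = T1 + (2*R2/(R1+R2)) *\<^sub>R (C1 - T1) + (R1/(R1+R2)) *\<^sub>R (T2 - T1)"
    "K = T1 + (R1/(R1-R2)) *\<^sub>R (T2 - T1)"
proof -
  define n where "n = C1 - T1"
  define w where "w = T2 - T1"
  define m where "m = C2 - T2"
  have nn: "n \<bullet> n = R1^2" using T1_on by (simp add: n_def dot_square_norm dist_norm norm_minus_commute)
  have mm: "m \<bullet> m = R2^2" using T2_on by (simp add: m_def dot_square_norm dist_norm norm_minus_commute)
  have nw: "n \<bullet> w = 0" using T1_tan by (simp add: n_def w_def inner_commute)
  have mw: "m \<bullet> w = 0" using T2_tan
    by (simp add: m_def w_def inner_commute) (metis inner_minus_right minus_diff_eq neg_equal_0_iff_equal)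
  have w0: "w \<noteq> 0" using T12_ne by (simp add: w_def)
  have nm0: "n \<bullet> m > 0" using same_side by (simp add: n_def m_def)
  have "(n \<bullet> m)^2 = (R1*R2)^2" using key2d[OF nw mw w0] nn mm by (simp add: power_mult_distrib)
  then have nm: "n \<bullet> m = R1*R2" using nm0 R
    by (metis less_eq_real_def mult_pos_pos order.strict_trans power2_eq_iff_nonneg)
  define k where "k = R2/R1"
  have "(m - k *\<^sub>R n) \<bullet> (m - k *\<^sub>R n) = m\<bullet>m - 2*k*(n\<bullet>m) + k^2*(n\<bullet>n)"
    by (simp add: inner_simps inner_commute power2_eq_square algebra_simps)
  also have "\<dots> = 0" using R by (simp add: mm nm nn k_def field_simps power2_eq_square)
  finally have "m = k *\<^sub>R n" by simp
  then have C2: "C2 = T1 + k *\<^sub>R n + w" by (simp add: m_def w_def algebra_simps)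
  have "C2 - C1 = (k - 1) *\<^sub>R n + w" using C2 by (simp add: n_def algebra_simps)
  then have "(R1+R2)^2 = ((k - 1) *\<^sub>R n + w) \<bullet> ((k - 1) *\<^sub>R n + w)"
    using centers by (metis dist_commute dist_norm dot_square_norm)
  also have "\<dots> = (k-1)^2 * R1^2 + w \<bullet> w" using nw nn
    by (simp add: inner_simps inner_commute power2_eq_square algebra_simps)
  finally have ww: "w \<bullet> w = 4*R1*R2" using R by (simp add: k_def field_simps power2_eq_square)
  show "(C1 - T1) \<bullet> (C1 - T1) = R1^2" "(T2 - T1) \<bullet> (T2 - T1) = 4*R1*R2"
    "(C1 - T1) \<bullet> (T2 - T1) = 0" "C1 = T1 + (C1 - T1)" "T2 = T1 + (T2 - T1)"
    using nn ww nw by (simp_all add: n_def w_def)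
  show "C2 = T1 + (R2/R1) *\<^sub>R (C1 - T1) + (T2 - T1)" using C2 by (simp add: k_def n_def w_def)
  obtain u where u: "0 \<le> u" "u \<le> 1" "I = (1 - u) *\<^sub>R C1 + u *\<^sub>R C2"
    using I_seg by (auto simp: closed_segment_def)
  have "I - C1 = u *\<^sub>R (C2 - C1)" using u(3) by (simp add: algebra_simps)
  then have "dist C1 I = u * (R1 + R2)" using u centers
    by (metis abs_of_nonneg dist_commute dist_norm norm_scaleR)
  then have uv: "u = R1/(R1+R2)" using I_dist R by (simp add: field_simps)
  have "I = T1 + (1 + u*(k-1)) *\<^sub>R n + u *\<^sub>R w" using u(3) C2
    by (simp add: n_def w_def algebra_simps)
  moreover have "1 + u*(k-1) = 2*R2/(R1+R2)"
  proof -
    have "R1 \<noteq> 0" "R1 + R2 \<noteq> 0" using R by auto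
    then show ?thesis unfolding uv k_def by (simp add: divide_simps)
  qed
  ultimately show "I = T1 + (2*R2/(R1+R2)) *\<^sub>R (C1 - T1) + (R1/(R1+R2)) *\<^sub>R (T2 - T1)"
    by (simp add: uv n_def w_def)
  have "K \<in> affine hull {T1, T2}" using collinear_3_imp_in_affine_hull[OF K_T T12_ne] .
  then obtain p q where pq: "K = p *\<^sub>R T1 + q *\<^sub>R T2" "p + q = 1" by (auto simp: affine_hull_2)
  have p: "p = 1 - q" using pq(2) by simp
  have KT: "K = T1 + q *\<^sub>R w" using pq(1) unfolding p w_def by (simp add: algebra_simps)
  have C12: "C1 \<noteq> C2" using centers R by auto
  have "K \<in> affine hull {C1, C2}" using collinear_3_imp_in_affine_hull[OF K_C C12] .
  then obtain p' q' where pq': "K = p' *\<^sub>R C1 + q' *\<^sub>R C2" "p' + q' = 1" by (auto simp: affine_hull_2)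
  have p': "p' = 1 - q'" using pq'(2) by simp
  have "K = T1 + (1 + q'*(k-1)) *\<^sub>R n + q' *\<^sub>R w" using pq'(1) C2 unfolding p'
    by (simp add: n_def w_def algebra_simps)
  then have eq: "(1 + q'*(k-1)) *\<^sub>R n + (q' - q) *\<^sub>R w = 0" using KT by (simp add: algebra_simps)
  have "n \<bullet> ((1 + q'*(k-1)) *\<^sub>R n + (q' - q) *\<^sub>R w) = 0" using eq by simp
  then have "(1 + q'*(k-1)) * R1^2 = 0" using nn nw by (simp add: inner_simps)
  then have h1: "1 + q'*(k-1) = 0" using R by simp
  have "w \<bullet> ((1 + q'*(k-1)) *\<^sub>R n + (q' - q) *\<^sub>R w) = 0" using eq by simp
  then have "(q' - q) * (4*R1*R2) = 0" using ww nw h1 by (simp add: inner_simps inner_commute)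
  then have "q = q'" using R by simp
  moreover have "q' = R1/(R1-R2)" using h1 R by (simp add: k_def field_simps)
  ultimately show "K = T1 + (R1/(R1-R2)) *\<^sub>R (T2 - T1)" using KT by (simp add: w_def)
qed




lemma sqrt_eq: "0 \<le> X \<Longrightarrow> E = X^2 \<Longrightarrow> sqrt E = X" by simp

lemma dform:
  fixes P :: "real \<Rightarrow> real \<Rightarrow> 'a::metric_space" and a b c d :: real
  assumes c2: "c^2 = a^2 + b^2" and ab: "a > b" "b > 0" and c: "c > 0" and d: "d > 0"
    and Pd: "\<And>x1 y1 x2 y2. dist (P x1 y1) (P x2 y2) = sqrt((x1-x2)^2*(d*a^2)^2 + (y1-y2)^2*(2*d*a*b)^2)"
  shows "dist (P 0 0) (P 0 1) = 2*d*a*b"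
    "dist (P 1 0) (P 0 (1/2)) = d*a*c"
    "dist (P (b^2/a^2) 1) (P 0 (1/2)) = d*b*c"
    "dist (P 0 0) (P (2*b^2/c^2) (a^2/c^2)) = 2*d*a^2*b/c"
    "dist (P 0 1) (P (2*b^2/c^2) (a^2/c^2)) = 2*d*a*b^2/c"
    "dist (P 1 0) (P (b^2/c^2) (a^2/(2*c^2))) = d*a^3/c"
    "dist (P (b^2/a^2) 1) (P (b^2/c^2) ((a^2/c^2+1)/2)) = d*b^3/c"
    "dist (P (b^2/c^2) (a^2/(2*c^2))) (P 0 (1/2)) = d*a*b^2/c"
    "dist (P (b^2/c^2) ((a^2/c^2+1)/2)) (P 0 (1/2)) = d*a^2*b/c"
    "dist (P (2*b^2/c^2) (a^2/c^2)) (P 0 (1/2)) = d*a*b"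
    "dist (P 0 0) (P 0 (1/2)) = d*a*b"
    "dist (P 0 1) (P 0 (1/2)) = d*a*b"
    "dist (P (b^2/a^2) 1) (P 0 (a^2/(a^2-b^2))) = d*b^2*c^2/(a^2-b^2)"
    "dist (P 0 1) (P 0 (a^2/(a^2-b^2))) = 2*d*a*b^3/(a^2-b^2)"
    "dist (P 1 0) (P 0 (a^2/(a^2-b^2))) = d*a^2*c^2/(a^2-b^2)"
    "dist (P 0 0) (P 0 (a^2/(a^2-b^2))) = 2*d*a^3*b/(a^2-b^2)"
    "dist (P 1 0) (P 0 0) = d*a^2"
    "dist (P 0 0) (P (b^2/c^2) (a^2/(2*c^2))) = d*a^2*b/c"
    "dist (P 1 0) (P (2*b^2/c^2) (a^2/c^2)) = d*a^2"
    "dist (P (2*b^2/c^2) (a^2/c^2)) (P (b^2/c^2) (a^2/(2*c^2))) = d*a^2*b/c"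
    "dist (P (b^2/a^2) 1) (P 0 1) = d*b^2"
    "dist (P 0 1) (P (b^2/c^2) ((a^2/c^2+1)/2)) = d*a*b^2/c"
    "dist (P (b^2/a^2) 1) (P (2*b^2/c^2) (a^2/c^2)) = d*b^2"
    "dist (P (2*b^2/c^2) (a^2/c^2)) (P (b^2/c^2) ((a^2/c^2+1)/2)) = d*a*b^2/c"
    "dist (P 1 0) (P (b^2/a^2) 1) = d*(a^2+b^2)"
proof -
  have a: "a > 0" using ab by simp
  have ab2: "a^2 - b^2 > 0" using ab by (simp add: power_strict_mono)
  have nz: "a \<noteq> 0" "b \<noteq> 0" "c \<noteq> 0" "a^2 - b^2 \<noteq> 0" using a ab c ab2 by auto
  note pos = a ab c d ab2
  show "dist (P 0 0) (P 0 1) = 2*d*a*b"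
    unfolding Pd using pos by (intro sqrt_eq) (simp_all add: field_simps power2_eq_square)
  show "dist (P 1 0) (P 0 (1/2)) = d*a*c"
    unfolding Pd using pos nz apply (intro sqrt_eq) apply simp by (simp add: field_simps; use c2 in algebra)
  show "dist (P (b^2/a^2) 1) (P 0 (1/2)) = d*b*c"
    unfolding Pd using pos nz apply (intro sqrt_eq) apply simp by (simp add: field_simps; use c2 in algebra)
  show "dist (P 0 0) (P (2*b^2/c^2) (a^2/c^2)) = 2*d*a^2*b/c"
    unfolding Pd using pos nz apply (intro sqrt_eq) apply simp by (simp add: field_simps; use c2 in algebra)
  show "dist (P 0 1) (P (2*b^2/c^2) (a^2/c^2)) = 2*d*a*b^2/c"
    unfolding Pd using pos nz apply (intro sqrt_eq) apply simp by (simp add: field_simps; use c2 in algebra)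
  show "dist (P 1 0) (P (b^2/c^2) (a^2/(2*c^2))) = d*a^3/c"
    unfolding Pd using pos nz apply (intro sqrt_eq) apply simp by (simp add: field_simps; use c2 in algebra)
  show "dist (P (b^2/a^2) 1) (P (b^2/c^2) ((a^2/c^2+1)/2)) = d*b^3/c"
    unfolding Pd using pos nz apply (intro sqrt_eq) apply simp by (simp add: field_simps; use c2 in algebra)
  show "dist (P (b^2/c^2) (a^2/(2*c^2))) (P 0 (1/2)) = d*a*b^2/c"
    unfolding Pd using pos nz apply (intro sqrt_eq) apply simp by (simp add: field_simps; use c2 in algebra)
  show "dist (P (b^2/c^2) ((a^2/c^2+1)/2)) (P 0 (1/2)) = d*a^2*b/c"
    unfolding Pd using pos nz apply (intro sqrt_eq) apply simp by (simp add: field_simps; use c2 in algebra)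
  show "dist (P (2*b^2/c^2) (a^2/c^2)) (P 0 (1/2)) = d*a*b"
    unfolding Pd using pos nz apply (intro sqrt_eq) apply simp by (simp add: field_simps; use c2 in algebra)
  show "dist (P 0 0) (P 0 (1/2)) = d*a*b"
    unfolding Pd using pos nz apply (intro sqrt_eq) apply simp by (simp add: field_simps; use c2 in algebra)
  show "dist (P 0 1) (P 0 (1/2)) = d*a*b"
    unfolding Pd using pos nz apply (intro sqrt_eq) apply simp by (simp add: field_simps; use c2 in algebra)
  show "dist (P (b^2/a^2) 1) (P 0 (a^2/(a^2-b^2))) = d*b^2*c^2/(a^2-b^2)"
    unfolding Pd using pos nz apply (intro sqrt_eq) apply simp by (simp add: field_simps; use c2 in algebra)
  show "dist (P 0 1) (P 0 (a^2/(a^2-b^2))) = 2*d*a*b^3/(a^2-b^2)"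
    unfolding Pd using pos nz apply (intro sqrt_eq) apply simp by (simp add: field_simps; use c2 in algebra)
  show "dist (P 1 0) (P 0 (a^2/(a^2-b^2))) = d*a^2*c^2/(a^2-b^2)"
    unfolding Pd using pos nz apply (intro sqrt_eq) apply simp by (simp add: field_simps; use c2 in algebra)
  show "dist (P 0 0) (P 0 (a^2/(a^2-b^2))) = 2*d*a^3*b/(a^2-b^2)"
    unfolding Pd using pos nz apply (intro sqrt_eq) apply simp by (simp add: field_simps; use c2 in algebra)
  show "dist (P 1 0) (P 0 0) = d*a^2"
    unfolding Pd using pos nz apply (intro sqrt_eq) apply simp by (simp add: field_simps; use c2 in algebra)
  show "dist (P 0 0) (P (b^2/c^2) (a^2/(2*c^2))) = d*a^2*b/c"
    unfolding Pd using pos nz apply (intro sqrt_eq) apply simp by (simp add: field_simps; use c2 in algebra)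
  show "dist (P 1 0) (P (2*b^2/c^2) (a^2/c^2)) = d*a^2"
    unfolding Pd using pos nz apply (intro sqrt_eq) apply simp by (simp add: field_simps; use c2 in algebra)
  show "dist (P (2*b^2/c^2) (a^2/c^2)) (P (b^2/c^2) (a^2/(2*c^2))) = d*a^2*b/c"
    unfolding Pd using pos nz apply (intro sqrt_eq) apply simp by (simp add: field_simps; use c2 in algebra)
  show "dist (P (b^2/a^2) 1) (P 0 1) = d*b^2"
    unfolding Pd using pos nz apply (intro sqrt_eq) apply simp by (simp add: field_simps; use c2 in algebra)
  show "dist (P 0 1) (P (b^2/c^2) ((a^2/c^2+1)/2)) = d*a*b^2/c"
    unfolding Pd using pos nz apply (intro sqrt_eq) apply simp by (simp add: field_simps; use c2 in algebra)
  show "dist (P (b^2/a^2) 1) (P (2*b^2/c^2) (a^2/c^2)) = d*b^2"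
    unfolding Pd using pos nz apply (intro sqrt_eq) apply simp by (simp add: field_simps; use c2 in algebra)
  show "dist (P (2*b^2/c^2) (a^2/c^2)) (P (b^2/c^2) ((a^2/c^2+1)/2)) = d*a*b^2/c"
    unfolding Pd using pos nz apply (intro sqrt_eq) apply simp by (simp add: field_simps; use c2 in algebra)
  show "dist (P 1 0) (P (b^2/a^2) 1) = d*(a^2+b^2)"
    unfolding Pd using pos nz apply (intro sqrt_eq) apply simp by (simp add: power_divide power2_eq_square divide_simps; algebra)
qed



lemma sq_mod4: "(x::nat)^2 mod 4 = 0 \<or> (x::nat)^2 mod 4 = 1"
proof -
  have "x^2 mod 4 = (x mod 4)^2 mod 4" by (simp add: power_mod)
  moreover have "x mod 4 < 4" by simp
  then have "x mod 4 = 0 \<or> x mod 4 = 1 \<or> x mod 4 = 2 \<or> x mod 4 = 3" by linarith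
  ultimately show ?thesis by (auto simp: power2_eq_square)
qed

lemma odd_sq_mod4: "odd (x::nat) \<Longrightarrow> x^2 mod 4 = 1"
proof -
  assume "odd x" then obtain k where "x = 2*k+1" using oddE by blast
  then have "x^2 = 4*(k*k+k) + 1" by (simp add: power2_eq_square algebra_simps)
  then show ?thesis by simp
qed

lemma ntfacts:
  fixes a b c :: nat
  assumes "a > b" "b > 0" "gcd a b = 1" "a^2 + b^2 = c^2"
  shows "coprime c a" "coprime (a^2 - b^2) (a^2 * c^2)" "coprime c (a^2 - b^2)"
proof -
  have cab: "coprime (a^2) (b^2)" using assms(3) by (simp add: coprime_iff_gcd_eq_1)
  have "gcd (c^2) (a^2) = gcd (b^2 + a^2) (a^2)" using assms(4) by (simp add: add.commute)
  also have "\<dots> = gcd (b^2) (a^2)" by simp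
  also have "\<dots> = 1" using cab by (simp add: coprime_iff_gcd_eq_1 gcd.commute)
  finally have "coprime (c^2) (a^2)" by (metis coprime_iff_gcd_eq_1)
  then show ca: "coprime c a" by simp
  define D where "D = a^2 - b^2"
  have b2a2: "b^2 < a^2" using assms by (simp add: power_strict_mono)
  have Da: "a^2 = D + b^2" using b2a2 by (simp add: D_def)
  have Db2: "coprime D (b^2)"
  proof -
    have "gcd D (b^2) = gcd (D + b^2) (b^2)" by simp
    then show ?thesis using cab by (simp add: Da[symmetric] coprime_iff_gcd_eq_1)
  qed
  have "gcd D (a^2) = gcd D (b^2)" unfolding Da by (rule gcd_add2)
  then have Da2: "coprime D (a^2)" using Db2 by (metis coprime_iff_gcd_eq_1)
  have par: "odd a \<noteq> odd b"
  proof
    assume h: "odd a = odd b"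
    show False
    proof (cases "odd a")
      case True
      then have "odd b" using h by simp
      then have "c^2 mod 4 = 2" using True assms(4)[symmetric] odd_sq_mod4[of a] odd_sq_mod4[of b]
        by (simp add: mod_add_eq[symmetric])
      then show False using sq_mod4[of c] by simp
    next
      case False
      then have "even b" using h by simp
      then have "2 dvd gcd a b" using False by simp
      then show False using assms(3) by simp
    qed
  qed
  have oD: "odd D"
  proof (rule ccontr)
    assume "\<not> odd D"
    then have "even D" by simp
    then have "odd (a^2) = odd (b^2)" using Da by simp
    then show False using par by simp
  qed
  have "coprime D 2" using oD by (simp add: coprime_commute)
  then have "coprime D (2 * b^2)" using Db2 by simp
  then have "gcd D (2*b^2) = 1" by (simp add: coprime_iff_gcd_eq_1)
  moreover have "c^2 = D + 2*b^2" using assms(4) Da by simp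
  ultimately have "gcd D (c^2) = 1" by (metis gcd.commute gcd_add2)
  then have Dc2: "coprime D (c^2)" by (simp add: coprime_iff_gcd_eq_1)
  show "coprime (a^2 - b^2) (a^2 * c^2)" using Da2 Dc2 by (simp add: D_def)
  show "coprime c (a^2 - b^2)" using Dc2 by (simp add: D_def coprime_commute)
qed




lemma int_div: "(n::nat) > 0 \<Longrightarrow> real m / real n \<in> \<int> \<Longrightarrow> n dvd m"
proof -
  assume n: "n > 0" and h: "real m / real n \<in> \<int>"
  then obtain z where z: "real m / real n = of_int z" by (auto elim: Ints_cases)
  then have "real m = of_int z * real n" using n by (simp add: field_simps)
  then have "int m = z * int n" by (metis of_int_eq_iff of_int_mult of_int_of_nat_eq)
  then have "int n dvd int m" by simp
  then show ?thesis by simp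
qed

lemma mid_P: "midpoint (T + x1 *\<^sub>R n + y1 *\<^sub>R w) (T + x2 *\<^sub>R n + y2 *\<^sub>R w)
   = (T::real^2) + ((x1+x2)/2) *\<^sub>R n + ((y1+y2)/2) *\<^sub>R w"
  by (simp add: vec_eq_iff forall_2 midpoint_def field_simps)

theorem mainTheorem4:
  fixes C1 C2 I T1 T2 M M1 M2 K :: "real ^ 2"
    and R1 R2 :: real
    and \<delta> r1 r2 r3 :: nat
  assumes pos: "\<delta> > 0" "r1 > 0" "r2 > 0" "r3 > 0"
    and coprime: "gcd r1 r2 = 1"
    and r12: "r1 > r2"
    and pyth: "r1^2 + r2^2 = r3^2"
    and R1_def: "R1 = real (\<delta> * r1^2)"
    and R2_def: "R2 = real (\<delta> * r2^2)"
    and centers: "dist C1 C2 = R1 + R2"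
    and I_seg: "I \<in> closed_segment C1 C2" and I_dist: "dist C1 I = R1"
    and T1_on: "dist C1 T1 = R1" and T2_on: "dist C2 T2 = R2"
    and T1_tan: "(T2 - T1) \<bullet> (C1 - T1) = 0"
    and T2_tan: "(T1 - T2) \<bullet> (C2 - T2) = 0"
    and T12_ne: "T1 \<noteq> T2"
    and same_side: "(C1 - T1) \<bullet> (C2 - T2) > 0"
    and M_def: "M = midpoint T1 T2"
    and M1_def: "M1 = midpoint T1 I"
    and M2_def: "M2 = midpoint T2 I"
    and K_T: "collinear {T1, T2, K}" and K_C: "collinear {C1, C2, K}"
  shows
   "((dist T1 T2 \<in> \<int> \<and> dist C1 M \<in> \<int> \<and> dist C2 M \<in> \<int> \<and>
      dist T1 I \<in> \<int> \<and> dist T2 I \<in> \<int> \<and> dist C1 M1 \<in> \<int> \<and>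
      dist C2 M2 \<in> \<int> \<and> dist M1 M \<in> \<int> \<and> dist M2 M \<in> \<int> \<and>
      dist I M \<in> \<int> \<and> dist C2 K \<in> \<int> \<and> dist T2 K \<in> \<int> \<and>
      dist C1 K \<in> \<int> \<and> dist T1 K \<in> \<int>)
     \<longleftrightarrow> r3 * (r1^2 - r2^2) dvd \<delta>)
    \<and>
    (\<forall>t::nat. \<delta> = t * r3 * (r1^2 - r2^2) \<longrightarrow>
      R1 = real (t * r3 * r1^2 * (r1^2 - r2^2)) \<and>
      R2 = real (t * r3 * r2^2 * (r1^2 - r2^2)) \<and>
      dist T1 T2 = real (2 * t * r1 * r2 * r3 * (r1^2 - r2^2)) \<and>
      dist C1 M = real (t * r1 * r3^2 * (r1^2 - r2^2)) \<and>
      dist C2 M = real (t * r2 * r3^2 * (r1^2 - r2^2)) \<and>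
      dist T1 I = real (2 * t * r2 * r1^2 * (r1^2 - r2^2)) \<and>
      dist T2 I = real (2 * t * r1 * r2^2 * (r1^2 - r2^2)) \<and>
      dist C1 M1 = real (t * r1^3 * (r1^2 - r2^2)) \<and>
      dist C2 M2 = real (t * r2^3 * (r1^2 - r2^2)) \<and>
      dist M1 M = real (t * r1 * r2^2 * (r1^2 - r2^2)) \<and>
      dist M2 M = real (t * r2 * r1^2 * (r1^2 - r2^2)) \<and>
      dist I M = real (t * r1 * r2 * r3 * (r1^2 - r2^2)) \<and>
      dist T1 M = real (t * r1 * r2 * r3 * (r1^2 - r2^2)) \<and>
      dist T2 M = real (t * r1 * r2 * r3 * (r1^2 - r2^2)) \<and>
      dist C2 K = real (t * r2^2 * r3^3) \<and>
      dist T2 K = real (2 * t * r1 * r3 * r2^3) \<and>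
      dist C1 K = real (t * r1^2 * r3^3) \<and>
      dist T1 K = real (2 * t * r2 * r3 * r1^3) \<and>
      \<comment> \<open>all sides of the listed right triangles are integers\<close>
      (\<forall>d \<in> {dist C1 T1, dist T1 M1, dist C1 M1, dist C1 I, dist I M1,
               dist C2 T2, dist T2 M2, dist C2 M2, dist C2 I, dist I M2,
               dist M1 M, dist T1 M, dist I M, dist M2 M, dist T2 M,
               dist C1 M, dist C2 M, dist C1 C2, dist T1 I, dist T2 I, dist T1 T2,
               dist T2 K, dist C2 K, dist T1 K, dist C1 K}. d \<in> \<int>))"
proof -
  define a where "a = real r1"
  define b where "b = real r2"
  define c where "c = real r3"
  define d where "d = real \<delta>"
  have c2: "c^2 = a^2 + b^2" unfolding a_def b_def c_def
    by (metis of_nat_add of_nat_power pyth)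
  have ab: "a > b" "b > 0" and cp: "c > 0" and dp: "d > 0"
    using pos r12 by (simp_all add: a_def b_def c_def d_def)
  have ap: "a > 0" using ab by simp
  have R1d: "R1 = d*a^2" and R2d: "R2 = d*b^2" by (simp_all add: R1_def R2_def a_def b_def d_def)
  have ab2: "a^2 > b^2" using ab by (simp add: power_strict_mono)
  have RR: "R1 > R2" "R2 > 0" using ab2 dp ab by (simp_all add: R1d R2d)
  note g = geom[OF RR centers I_seg I_dist T1_on T2_on T1_tan T2_tan T12_ne same_side K_T K_C]
  define n where "n = C1 - T1"
  define w where "w = T2 - T1"
  define P where "P = (\<lambda>x y. T1 + x *\<^sub>R n + y *\<^sub>R w)"
  have nn: "n \<bullet> n = (d*a^2)^2" using g(1) by (simp add: n_def R1d)
  have ww: "w \<bullet> w = (2*d*a*b)^2" using g(2) by (simp add: w_def R1d R2d power2_eq_square)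
  have nw: "n \<bullet> w = 0" using g(3) by (simp add: n_def w_def)
  have Pd: "\<And>x1 y1 x2 y2. dist (P x1 y1) (P x2 y2) = sqrt((x1-x2)^2*(d*a^2)^2 + (y1-y2)^2*(2*d*a*b)^2)"
  proof -
    fix x1 y1 x2 y2
    have "P x1 y1 - P x2 y2 = (x1-x2) *\<^sub>R n + (y1-y2) *\<^sub>R w" by (simp add: P_def algebra_simps)
    then show "dist (P x1 y1) (P x2 y2) = sqrt((x1-x2)^2*(d*a^2)^2 + (y1-y2)^2*(2*d*a*b)^2)"
      using coordnorm[OF nw] nn ww by (simp add: dist_norm)
  qed
  have PC1: "C1 = P 1 0" and PT1: "T1 = P 0 0" and PT2: "T2 = P 0 1"
    by (simp_all add: P_def n_def w_def)
  have k: "R2/R1 = b^2/a^2" using dp ap by (simp add: R1d R2d)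
  have PC2: "C2 = P (b^2/a^2) 1" using g(6) by (simp add: P_def n_def w_def k)
  have i1: "2*R2/(R1+R2) = 2*b^2/c^2" and i2: "R1/(R1+R2) = a^2/c^2" using dp
    by (simp_all add: R1d R2d c2 divide_simps distrib_left[symmetric])
  have PI: "I = P (2*b^2/c^2) (a^2/c^2)" using g(7) by (simp add: P_def n_def w_def i1 i2)
  have kk: "R1/(R1-R2) = a^2/(a^2-b^2)" using dp ab2
    by (simp add: R1d R2d divide_simps right_diff_distrib[symmetric])
  have PK: "K = P 0 (a^2/(a^2-b^2))" using g(8) by (simp add: P_def n_def w_def kk)
  have PM: "M = P 0 (1/2)" unfolding M_def P_def by (simp add: w_def vec_eq_iff forall_2 midpoint_def field_simps)
  have PM1: "M1 = P (b^2/c^2) (a^2/(2*c^2))" using cp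
    unfolding M1_def PI using mid_P[of T1 0 n 0 w "2*b^2/c^2" "a^2/c^2"] unfolding P_def by simp
  have PM2: "M2 = P (b^2/c^2) ((a^2/c^2+1)/2)" using cp
    unfolding M2_def PI using mid_P[of T1 0 n 1 w "2*b^2/c^2" "a^2/c^2"] unfolding P_def
    by (simp add: w_def add.commute)
  note F = dform[OF c2 ab cp dp Pd]
  have dists:
    "dist T1 T2 = 2*d*a*b" "dist C1 M = d*a*c" "dist C2 M = d*b*c"
    "dist T1 I = 2*d*a^2*b/c" "dist T2 I = 2*d*a*b^2/c" "dist C1 M1 = d*a^3/c"
    "dist C2 M2 = d*b^3/c" "dist M1 M = d*a*b^2/c" "dist M2 M = d*a^2*b/c"
    "dist I M = d*a*b" "dist T1 M = d*a*b" "dist T2 M = d*a*b"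
    "dist C2 K = d*b^2*c^2/(a^2-b^2)" "dist T2 K = 2*d*a*b^3/(a^2-b^2)"
    "dist C1 K = d*a^2*c^2/(a^2-b^2)" "dist T1 K = 2*d*a^3*b/(a^2-b^2)"
    "dist C1 T1 = d*a^2" "dist T1 M1 = d*a^2*b/c" "dist C1 I = d*a^2" "dist I M1 = d*a^2*b/c"
    "dist C2 T2 = d*b^2" "dist T2 M2 = d*a*b^2/c" "dist C2 I = d*b^2" "dist I M2 = d*a*b^2/c"
    "dist C1 C2 = d*(a^2+b^2)"
    unfolding PC1 PT1 PT2 PC2 PI PK PM PM1 PM2 using F by simp_all
  have r21: "r2^2 \<le> r1^2" using r12 by (simp add: power_mono)
  have rD: "real (r1^2 - r2^2) = a^2 - b^2" using r21 by (simp add: of_nat_diff a_def b_def)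
  have ra: "real r1 = a" and rb: "real r2 = b" and rc: "real r3 = c" and rd: "real \<delta> = d"
    by (simp_all add: a_def b_def c_def d_def)
  have nz: "c \<noteq> 0" "a^2 - b^2 \<noteq> 0" using cp ab2 by auto
  have part2: "\<delta> = t * r3 * (r1^2 - r2^2) \<Longrightarrow>
      R1 = real (t * r3 * r1^2 * (r1^2 - r2^2)) \<and>
      R2 = real (t * r3 * r2^2 * (r1^2 - r2^2)) \<and>
      dist T1 T2 = real (2 * t * r1 * r2 * r3 * (r1^2 - r2^2)) \<and>
      dist C1 M = real (t * r1 * r3^2 * (r1^2 - r2^2)) \<and>
      dist C2 M = real (t * r2 * r3^2 * (r1^2 - r2^2)) \<and>
      dist T1 I = real (2 * t * r2 * r1^2 * (r1^2 - r2^2)) \<and>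
      dist T2 I = real (2 * t * r1 * r2^2 * (r1^2 - r2^2)) \<and>
      dist C1 M1 = real (t * r1^3 * (r1^2 - r2^2)) \<and>
      dist C2 M2 = real (t * r2^3 * (r1^2 - r2^2)) \<and>
      dist M1 M = real (t * r1 * r2^2 * (r1^2 - r2^2)) \<and>
      dist M2 M = real (t * r2 * r1^2 * (r1^2 - r2^2)) \<and>
      dist I M = real (t * r1 * r2 * r3 * (r1^2 - r2^2)) \<and>
      dist T1 M = real (t * r1 * r2 * r3 * (r1^2 - r2^2)) \<and>
      dist T2 M = real (t * r1 * r2 * r3 * (r1^2 - r2^2)) \<and>
      dist C2 K = real (t * r2^2 * r3^3) \<and>
      dist T2 K = real (2 * t * r1 * r3 * r2^3) \<and>
      dist C1 K = real (t * r1^2 * r3^3) \<and>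
      dist T1 K = real (2 * t * r2 * r3 * r1^3) \<and>
      (\<forall>d \<in> {dist C1 T1, dist T1 M1, dist C1 M1, dist C1 I, dist I M1,
               dist C2 T2, dist T2 M2, dist C2 M2, dist C2 I, dist I M2,
               dist M1 M, dist T1 M, dist I M, dist M2 M, dist T2 M,
               dist C1 M, dist C2 M, dist C1 C2, dist T1 I, dist T2 I, dist T1 T2,
               dist T2 K, dist C2 K, dist T1 K, dist C1 K}. d \<in> \<int>)" for t
  proof -
    assume h: "\<delta> = t * r3 * (r1^2 - r2^2)"
    have e: "d = real t * c * (a^2 - b^2)" using h rD by (simp add: d_def c_def)
    note S = dists e rD ra rb rc R1d R2d
    have L: "R1 = real (t * r3 * r1^2 * (r1^2 - r2^2)) \<and>
      R2 = real (t * r3 * r2^2 * (r1^2 - r2^2)) \<and>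
      dist T1 T2 = real (2 * t * r1 * r2 * r3 * (r1^2 - r2^2)) \<and>
      dist C1 M = real (t * r1 * r3^2 * (r1^2 - r2^2)) \<and>
      dist C2 M = real (t * r2 * r3^2 * (r1^2 - r2^2)) \<and>
      dist T1 I = real (2 * t * r2 * r1^2 * (r1^2 - r2^2)) \<and>
      dist T2 I = real (2 * t * r1 * r2^2 * (r1^2 - r2^2)) \<and>
      dist C1 M1 = real (t * r1^3 * (r1^2 - r2^2)) \<and>
      dist C2 M2 = real (t * r2^3 * (r1^2 - r2^2)) \<and>
      dist M1 M = real (t * r1 * r2^2 * (r1^2 - r2^2)) \<and>
      dist M2 M = real (t * r2 * r1^2 * (r1^2 - r2^2)) \<and>
      dist I M = real (t * r1 * r2 * r3 * (r1^2 - r2^2)) \<and>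
      dist T1 M = real (t * r1 * r2 * r3 * (r1^2 - r2^2)) \<and>
      dist T2 M = real (t * r1 * r2 * r3 * (r1^2 - r2^2)) \<and>
      dist C2 K = real (t * r2^2 * r3^3) \<and>
      dist T2 K = real (2 * t * r1 * r3 * r2^3) \<and>
      dist C1 K = real (t * r1^2 * r3^3) \<and>
      dist T1 K = real (2 * t * r2 * r3 * r1^3)"
      using nz by (simp add: S field_simps; (intro conjI)?; algebra)
    have X: "dist C1 T1 = real (t * r3 * r1^2 * (r1^2 - r2^2))"
      "dist T1 M1 = real (t * r1^2 * r2 * (r1^2 - r2^2))"
      "dist C1 I = real (t * r3 * r1^2 * (r1^2 - r2^2))"
      "dist I M1 = real (t * r1^2 * r2 * (r1^2 - r2^2))"
      "dist C2 T2 = real (t * r3 * r2^2 * (r1^2 - r2^2))"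
      "dist T2 M2 = real (t * r1 * r2^2 * (r1^2 - r2^2))"
      "dist C2 I = real (t * r3 * r2^2 * (r1^2 - r2^2))"
      "dist I M2 = real (t * r1 * r2^2 * (r1^2 - r2^2))"
      "dist C1 C2 = real (t * r3 * (r1^2 + r2^2) * (r1^2 - r2^2))"
      using nz by (simp_all add: S field_simps)
    show ?thesis using L X by (simp del: of_nat_mult of_nat_power of_nat_add)
  qed
  have nt: "coprime r3 r1" "coprime (r1^2 - r2^2) (r1^2 * r3^2)" "coprime r3 (r1^2 - r2^2)"
    using ntfacts[OF r12 pos(3) coprime pyth] by auto
  have Dpos: "r1^2 - r2^2 > 0" using r12 by (simp add: power_strict_mono)
  have iff: "(dist T1 T2 \<in> \<int> \<and> dist C1 M \<in> \<int> \<and> dist C2 M \<in> \<int> \<and>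
      dist T1 I \<in> \<int> \<and> dist T2 I \<in> \<int> \<and> dist C1 M1 \<in> \<int> \<and>
      dist C2 M2 \<in> \<int> \<and> dist M1 M \<in> \<int> \<and> dist M2 M \<in> \<int> \<and>
      dist I M \<in> \<int> \<and> dist C2 K \<in> \<int> \<and> dist T2 K \<in> \<int> \<and>
      dist C1 K \<in> \<int> \<and> dist T1 K \<in> \<int>)
     \<longleftrightarrow> r3 * (r1^2 - r2^2) dvd \<delta>" (is "?L \<longleftrightarrow> ?R")
  proof
    assume H: ?L
    have "real (\<delta> * r1^3) / real r3 \<in> \<int>" using H dists(6) by (simp add: ra rc rd)
    then have "r3 dvd \<delta> * r1^3" using int_div pos(4) by blast
    then have d1: "r3 dvd \<delta>" using nt(1) by (simp add: coprime_dvd_mult_left_iff)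
    have "real (\<delta> * (r1^2 * r3^2)) / real (r1^2 - r2^2) \<in> \<int>" using H dists(15)
      by (simp add: ra rc rd rD mult.assoc)
    then have "(r1^2 - r2^2) dvd \<delta> * (r1^2 * r3^2)" using int_div Dpos by blast
    then have d2: "(r1^2 - r2^2) dvd \<delta>" using nt(2) by (simp add: coprime_dvd_mult_left_iff)
    show ?R using divides_mult[OF d1 d2 nt(3)] .
  next
    assume ?R
    then obtain t where "\<delta> = r3 * (r1^2 - r2^2) * t" by (auto elim: dvdE)
    then have "\<delta> = t * r3 * (r1^2 - r2^2)" by simp
    from part2[OF this] show ?L by (simp del: of_nat_mult of_nat_power of_nat_add of_nat_diff)
  qed
  show ?thesis using iff part2 by blast
qed


end
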